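(* Let $\theta\in[0,\pi/2]$, $\nu_1,\nu_2\in[0,1]$ with $\nu_1+\nu_2=1$, and $\rho_s=\nu_1|\psi_1\rangle\langle\psi_1|+\nu_2|\psi_2\rangle\langle\psi_2|$ with $|\psi_1\rangle=\cos\theta|00\rangle+\sin\theta|11\rangle$, $|\psi_2\rangle=\sin\theta|00\rangle-\cos\theta|11\rangle$, and let $\mathcal C=|(\nu_1-\nu_2)\sin2\theta|$ (its concurrence). Then there exist unit vectors $\hat a_1,\hat a_2,\hat a_3\in\mathbb R^3$ and an orthonormal triple $\hat b_1,\hat b_2,\hat b_3\in\mathbb R^3$ such that $\frac13\sum_{k=1}^3\mathrm{Tr}\big[\rho_s\,(\hat a_k\cdot\vec\sigma)\otimes(\hat b_k\cdot\vec\sigma)\big]=\frac{2+\sqrt{1+2\mathcal C^2}}{3\sqrt3},$ which is strictly larger than $\frac1{\sqrt3}$ whenever $\mathcal C>0$.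
   Context: $\vec\sigma=(\sigma_x,\sigma_y,\sigma_z)$ is the vector of Pauli matrices; the first tensor factor is Alice's qubit, the second Bob's; $\{|0\rangle,|1\rangle\}$ is the computational basis. The number $1/\sqrt3$ is the local-hidden-state bound of the 3-setting linear steering inequality. *)

theory Defs
  imports Complex_Main "Jordan_Normal_Form.Matrix"
begin

definition sigma_x :: "complex mat" where
  "sigma_x = mat_of_rows_list 2 [[0, 1], [1, 0]]"
definition sigma_y :: "complex mat" where
  "sigma_y = mat_of_rows_list 2 [[0, -\<i>], [\<i>, 0]]"
definition sigma_z :: "complex mat" where
  "sigma_z = mat_of_rows_list 2 [[1, 0], [0, -1]]"

definition pauli_dot :: "real vec \<Rightarrow> complex mat" where
  "pauli_dot a = complex_of_real (a $ 0) \<cdot>\<^sub>m sigma_x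
              + complex_of_real (a $ 1) \<cdot>\<^sub>m sigma_y
              + complex_of_real (a $ 2) \<cdot>\<^sub>m sigma_z"

(* Kronecker (tensor) product; the first factor is the more significant index *)
definition kron :: "complex mat \<Rightarrow> complex mat \<Rightarrow> complex mat" where
  "kron A B = mat (dim_row A * dim_row B) (dim_col A * dim_col B)
     (\<lambda>(i, j). A $$ (i div dim_row B, j div dim_col B) * B $$ (i mod dim_row B, j mod dim_col B))"

definition proj :: "complex vec \<Rightarrow> complex mat" where
  "proj v = mat (dim_vec v) (dim_vec v) (\<lambda>(i, j). v $ i * cnj (v $ j))"

(* two-qubit kets in basis |00>,|01>,|10>,|11> (Alice first) *)
definition psi1 :: "real \<Rightarrow> complex vec" where
  "psi1 \<theta> = vec_of_list [complex_of_real (cos \<theta>), 0, 0, complex_of_real (sin \<theta>)]"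
definition psi2 :: "real \<Rightarrow> complex vec" where
  "psi2 \<theta> = vec_of_list [complex_of_real (sin \<theta>), 0, 0, - complex_of_real (cos \<theta>)]"

definition rho_s :: "real \<Rightarrow> real \<Rightarrow> real \<Rightarrow> complex mat" where
  "rho_s \<theta> \<nu>1 \<nu>2 = complex_of_real \<nu>1 \<cdot>\<^sub>m proj (psi1 \<theta>) + complex_of_real \<nu>2 \<cdot>\<^sub>m proj (psi2 \<theta>)"

definition concurrence_s :: "real \<Rightarrow> real \<Rightarrow> real \<Rightarrow> real" where
  "concurrence_s \<theta> \<nu>1 \<nu>2 = \<bar>(\<nu>1 - \<nu>2) * sin (2 * \<theta>)\<bar>"

definition mtrace :: "complex mat \<Rightarrow> complex" where
  "mtrace A = (\<Sum>i<dim_row A. A $$ (i, i))"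

definition unit_vec3 :: "real vec \<Rightarrow> bool" where
  "unit_vec3 a \<longleftrightarrow> dim_vec a = 3 \<and> a \<bullet> a = 1"

end

theory Submission imports Defs begin
lemma mtrace_mult4: "A \<in> carrier_mat 4 4 \<Longrightarrow> B \<in> carrier_mat 4 4 \<Longrightarrow>
  mtrace (A * B) = (\<Sum>i<4. \<Sum>j<4. A $$ (i,j) * B $$ (j,i))"
  unfolding mtrace_def by (simp add: scalar_prod_def sum.atLeast0_lessThan_Suc lessThan_atLeast0)

lemma pd_dims: "pauli_dot a \<in> carrier_mat 2 2"
  unfolding pauli_dot_def sigma_x_def sigma_y_def sigma_z_def by (auto simp: mat_of_rows_list_def)

lemma pd_entries: "pauli_dot a $$ (0,0) = a$2" "pauli_dot a $$ (Suc 0,Suc 0) = - a$2"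
  "pauli_dot a $$ (0,Suc 0) = a$0 - \<i> * a$Suc 0" "pauli_dot a $$ (Suc 0,0) = a$0 + \<i> * a$Suc 0"
  unfolding pauli_dot_def sigma_x_def sigma_y_def sigma_z_def
  by (auto simp: mat_of_rows_list_def)

lemma psi_entries:
  "psi1 th $ 0 = cos th" "psi1 th $ Suc 0 = 0" "psi1 th $ 2 = 0" "psi1 th $ 3 = sin th"
  "psi2 th $ 0 = sin th" "psi2 th $ Suc 0 = 0" "psi2 th $ 2 = 0" "psi2 th $ 3 = - cos th"
  "dim_vec (psi1 th) = 4" "dim_vec (psi2 th) = 4"
  unfolding psi1_def psi2_def by (simp_all add: vec_of_list_index del: vec_of_list_Cons)

lemma trace_formula:
  "mtrace (rho_s th n1 n2 * kron (pauli_dot a) (pauli_dot b)) =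
   complex_of_real ((n1*(cos th)^2 + n2*(sin th)^2 + n1*(sin th)^2 + n2*(cos th)^2) * (a$2*b$2)
     + 2*((n1-n2)*cos th*sin th) * (a$0*b$0 - a$1*b$1))"
proof -
  have K: "kron (pauli_dot a) (pauli_dot b) \<in> carrier_mat 4 4"
    using pd_dims[of a] pd_dims[of b] unfolding kron_def by auto
  have R: "rho_s th n1 n2 \<in> carrier_mat 4 4"
    unfolding rho_s_def proj_def psi1_def psi2_def by auto
  show ?thesis
    apply (subst mtrace_mult4[OF R K])
    using pd_dims[of a] pd_dims[of b]
    apply (simp add: lessThan_nat_numeral kron_def rho_s_def proj_def psi_entries pd_entries)
    apply (simp add: algebra_simps power2_eq_square)
    done
qed

lemma dot3: "vec_of_list [x1,x2,x3] \<bullet> vec_of_list [y1,y2,(y3::real)] = x1*y1+x2*y2+x3*y3"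
  by (simp add: scalar_prod_def vec_of_list_index lessThan_nat_numeral atLeast0LessThan)

lemma vl3: "vec_of_list [x1,x2,(x3::real)] $ 0 = x1" "vec_of_list [x1,x2,x3] $ Suc 0 = x2"
  "vec_of_list [x1,x2,x3] $ 2 = x3" "vec_of_list [x1,x2,x3] $ 1 = x2" "dim_vec (vec_of_list [x1,x2,x3]) = 3"
  by (simp_all add: vec_of_list_index del: vec_of_list_Cons)

theorem mainTheorem9:
  fixes \<theta> \<nu>1 \<nu>2 :: real
  assumes "0 \<le> \<theta>" and "\<theta> \<le> pi / 2"
    and "0 \<le> \<nu>1" and "\<nu>1 \<le> 1" and "0 \<le> \<nu>2" and "\<nu>2 \<le> 1"
    and "\<nu>1 + \<nu>2 = 1"
  shows "(\<exists>a b :: nat \<Rightarrow> real vec.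
            (\<forall>k\<in>{1..3}. unit_vec3 (a k)) \<and>
            (\<forall>k\<in>{1..3}. dim_vec (b k) = 3) \<and>
            (\<forall>k\<in>{1..3}. \<forall>l\<in>{1..3}. b k \<bullet> b l = (if k = l then 1 else 0)) \<and>
            (1 / 3) * (\<Sum>k\<in>{1..3::nat}. mtrace (rho_s \<theta> \<nu>1 \<nu>2 * kron (pauli_dot (a k)) (pauli_dot (b k))))
              = complex_of_real ((2 + sqrt (1 + 2 * (concurrence_s \<theta> \<nu>1 \<nu>2)\<^sup>2)) / (3 * sqrt 3)))
         \<and> (concurrence_s \<theta> \<nu>1 \<nu>2 > 0 \<longrightarrow>
              (2 + sqrt (1 + 2 * (concurrence_s \<theta> \<nu>1 \<nu>2)\<^sup>2)) / (3 * sqrt 3) > 1 / sqrt 3)"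
proof -
  define t where "t = (\<nu>1 - \<nu>2) * sin (2*\<theta>)"
  define s where "s = sqrt (1 + 2*t^2)"
  have s1: "s \<ge> 1" unfolding s_def by simp
  have ss: "s * s = 1 + 2*t^2" unfolding s_def by (simp add: add_nonneg_nonneg)
  have C: "concurrence_s \<theta> \<nu>1 \<nu>2 = \<bar>t\<bar>" unfolding concurrence_s_def t_def by simp
  have C2: "(concurrence_s \<theta> \<nu>1 \<nu>2)^2 = t^2" using C by simp
  have tr: "mtrace (rho_s \<theta> \<nu>1 \<nu>2 * kron (pauli_dot a) (pauli_dot b)) =
     complex_of_real (a$2*b$2 + t * (a$0*b$0 - a$1*b$1))" for a b
  proof -
    have "(\<nu>1*(cos \<theta>)^2 + \<nu>2*(sin \<theta>)^2 + \<nu>1*(sin \<theta>)^2 + \<nu>2*(cos \<theta>)^2) = 1"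
      using assms(7) sin_cos_squared_add[of \<theta>] by (metis distrib_left mult_1_right add.commute add.left_commute add.assoc distrib_right)
    moreover have "2*((\<nu>1-\<nu>2)*cos \<theta>*sin \<theta>) = t" unfolding t_def by (simp add: sin_double)
    ultimately show ?thesis by (simp add: trace_formula)
  qed
  define a :: "nat \<Rightarrow> real vec" where "a k = (if k = 3 then vec_of_list [0, sqrt 2 * t / s, 1/s] else vec_of_list [0,0,1])" for k
  define b :: "nat \<Rightarrow> real vec" where "b k = (if k = 1 then vec_of_list [1/sqrt 2, 1/sqrt 6, 1/sqrt 3]
     else if k = 2 then vec_of_list [-1/sqrt 2, 1/sqrt 6, 1/sqrt 3] else vec_of_list [0, -2/sqrt 6, 1/sqrt 3])" for k
  have e: "{1..3::nat} = {1,2,3}" by auto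
  have s6: "sqrt 6 = sqrt 2 * sqrt 3" by (simp flip: real_sqrt_mult)
  have pos: "0 < 1 + t*(t*2)" by (simp add: add_pos_nonneg)
  have ua: "\<forall>k\<in>{1..3}. unit_vec3 (a k)"
    unfolding e unit_vec3_def a_def using s1 ss pos by (auto simp: dot3 vl3 field_simps power2_eq_square)
  have db: "\<forall>k\<in>{1..3}. dim_vec (b k) = 3" unfolding b_def by (simp add: vl3)
  have ob: "\<forall>k\<in>{1..3}. \<forall>l\<in>{1..3}. b k \<bullet> b l = (if k = l then 1 else 0)"
    unfolding e b_def by (auto simp: dot3 s6 field_simps)
  have t3: "a 3 $ 2 * b 3 $ 2 + t * (a 3 $ 0 * b 3 $ 0 - a 3 $ 1 * b 3 $ 1) = s / sqrt 3"
    unfolding a_def b_def using s1 ss apply (simp add: vl3 del: vec_of_list_Cons)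
    apply (simp add: s6 field_simps power2_eq_square)
    by (metis (no_types, lifting) distrib_right mult.assoc mult.commute mult_1)
  have t1: "a k $ 2 * b k $ 2 + t * (a k $ 0 * b k $ 0 - a k $ 1 * b k $ 1) = 1 / sqrt 3" if "k = 1 \<or> k = 2" for k
    proof -
    have "a k = vec_of_list [0,0,1]" using that by (auto simp: a_def)
    moreover have "b k $ 2 = 1 / sqrt 3" using that by (auto simp: b_def vl3 simp del: vec_of_list_Cons)
    ultimately show ?thesis by (simp add: vl3 del: vec_of_list_Cons)
  qed
  have sum: "(1 / 3) * (\<Sum>k\<in>{1..3::nat}. mtrace (rho_s \<theta> \<nu>1 \<nu>2 * kron (pauli_dot (a k)) (pauli_dot (b k))))
              = complex_of_real ((2 + sqrt (1 + 2 * (concurrence_s \<theta> \<nu>1 \<nu>2)\<^sup>2)) / (3 * sqrt 3))"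
  proof -
    have "(\<Sum>k\<in>{1..3::nat}. mtrace (rho_s \<theta> \<nu>1 \<nu>2 * kron (pauli_dot (a k)) (pauli_dot (b k))))
       = complex_of_real (1 / sqrt 3) + complex_of_real (1 / sqrt 3) + complex_of_real (s / sqrt 3)"
    proof -
      have m1: "mtrace (rho_s \<theta> \<nu>1 \<nu>2 * kron (pauli_dot (a 1)) (pauli_dot (b 1))) = complex_of_real (1 / sqrt 3)"
        by (simp only: tr t1[of 1, OF disjI1[OF refl]])
      have m2: "mtrace (rho_s \<theta> \<nu>1 \<nu>2 * kron (pauli_dot (a 2)) (pauli_dot (b 2))) = complex_of_real (1 / sqrt 3)"
        by (simp only: tr t1[of 2, OF disjI2[OF refl]])
      have m3: "mtrace (rho_s \<theta> \<nu>1 \<nu>2 * kron (pauli_dot (a 3)) (pauli_dot (b 3))) = complex_of_real (s / sqrt 3)"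
        by (simp only: tr t3)
      have S: "(\<Sum>k\<in>{1,2,3::nat}. f k) = f 1 + f 2 + f 3" for f :: "nat \<Rightarrow> complex" by (simp add: add.assoc)
      show ?thesis unfolding e S m1 m2 m3 ..
    qed
    also have "\<dots> = complex_of_real ((2 + s) / sqrt 3)"
      by (simp only: of_real_add[symmetric] add_divide_distrib) simp
    finally have F: "(\<Sum>k\<in>{1..3::nat}. mtrace (rho_s \<theta> \<nu>1 \<nu>2 * kron (pauli_dot (a k)) (pauli_dot (b k)))) = complex_of_real ((2 + s) / sqrt 3)" .
    have r: "(2+s)/(3*sqrt 3) = (1/3)*((2+s)/sqrt 3)" by simp
    have c: "complex_of_real ((1/3)*x) = (1/3) * complex_of_real x" for x
      by (simp add: of_real_mult)
    show ?thesis unfolding C2 s_def[symmetric] F r c ..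
  qed
  have ineq: "concurrence_s \<theta> \<nu>1 \<nu>2 > 0 \<longrightarrow>
              (2 + sqrt (1 + 2 * (concurrence_s \<theta> \<nu>1 \<nu>2)\<^sup>2)) / (3 * sqrt 3) > 1 / sqrt 3"
  proof
    assume "concurrence_s \<theta> \<nu>1 \<nu>2 > 0"
    then have "sqrt (1 + 2 * (concurrence_s \<theta> \<nu>1 \<nu>2)\<^sup>2) > 1" by simp
    then show "(2 + sqrt (1 + 2 * (concurrence_s \<theta> \<nu>1 \<nu>2)\<^sup>2)) / (3 * sqrt 3) > 1 / sqrt 3"
      by (simp add: field_simps)
  qed
  show ?thesis using ua db ob sum ineq by blast
qed

end
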